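(* Let $B\in\mathbb{R}^{p\times H}$ be the incidence matrix described in the context, and assume the set of paths is nonempty. Then the all-ones vector $\mathbf 1\in\mathbb{R}^p$ does not belong to the column space of $B$.
   Context: $\mathcal G=(V,E)$ is a finite DAG; input neurons have no incoming edges, output neurons no outgoing edges, hidden neurons $\mathcal H$ ($H=|\mathcal H|$) are the rest. The parameter vector $\theta\in\mathbb{R}^p$ consists of one weight per edge and one bias $b_v$ per non-input neuron $v$. For $h\in\mathcal H$, $\mathrm{in}_h$ = indices of $b_h$ and of the weights of edges entering $h$, $\mathrm{out}_h$ = indices of the weights of edges leaving $h$. $B$ has columns indexed by $h\in\mathcal H$: $B_{ih}=-1$ if $i\in\mathrm{in}_h$, $1$ if $i\in\mathrm{out}_h$, $0$ otherwise. A path is a sequence $v_0\to\cdots\to v_d$ ($d\ge0$) along edges ending at an output neuron, where for $d=0$ the neuron $v_0$ is not an input neuron. *)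

theory Defs
  imports Complex_Main
begin

text \<open>Neural network DAG with vertex set V, edge relation E, designated input
neurons Inp and output neurons Out.  Parameters are indexed by edges (weights)
and by non-input neurons (biases).\<close>

datatype 'v param = Weight "'v \<times> 'v" | Bias 'v

definition params :: "'v set \<Rightarrow> ('v \<times> 'v) set \<Rightarrow> 'v set \<Rightarrow> 'v param set" where
  "params V E Inp = Weight ` E \<union> Bias ` (V - Inp)"

definition hidden :: "'v set \<Rightarrow> 'v set \<Rightarrow> 'v set \<Rightarrow> 'v set" where
  "hidden V Inp Out = V - Inp - Out"

definition in_idx :: "('v \<times> 'v) set \<Rightarrow> 'v \<Rightarrow> 'v param set" where
  "in_idx E h = insert (Bias h) (Weight ` {e \<in> E. snd e = h})"

definition out_idx :: "('v \<times> 'v) set \<Rightarrow> 'v \<Rightarrow> 'v param set" where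
  "out_idx E h = Weight ` {e \<in> E. fst e = h}"

text \<open>The matrix B (rows: parameter indices, columns: hidden neurons).\<close>
definition incB :: "('v \<times> 'v) set \<Rightarrow> 'v param \<Rightarrow> 'v \<Rightarrow> real" where
  "incB E i h = (if i \<in> in_idx E h then -1 else if i \<in> out_idx E h then 1 else 0)"

definition in_col_space :: "'i set \<Rightarrow> 'j set \<Rightarrow> ('i \<Rightarrow> 'j \<Rightarrow> real) \<Rightarrow> ('i \<Rightarrow> real) \<Rightarrow> bool" where
  "in_col_space P H M x \<longleftrightarrow> (\<exists>\<alpha>::'j \<Rightarrow> real. \<forall>i\<in>P. x i = (\<Sum>h\<in>H. M i h * \<alpha> h))"

definition is_path :: "'v set \<Rightarrow> ('v \<times> 'v) set \<Rightarrow> 'v set \<Rightarrow> 'v set \<Rightarrow> 'v list \<Rightarrow> bool" where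
  "is_path V E Inp Out vs \<longleftrightarrow>
     vs \<noteq> [] \<and> set vs \<subseteq> V \<and>
     (\<forall>k. Suc k < length vs \<longrightarrow> (vs ! k, vs ! Suc k) \<in> E) \<and>
     last vs \<in> Out \<and>
     (length vs = 1 \<longrightarrow> hd vs \<notin> Inp)"

end

theory Submission
  imports Defs
begin

theorem lemmaF5:
  fixes V :: "'v set" and E :: "('v \<times> 'v) set" and Inp Out :: "'v set"
  assumes "finite V"
    and "E \<subseteq> V \<times> V"
    and "acyclic E"
    and "Inp \<subseteq> V" and "Out \<subseteq> V"
    and "\<forall>v\<in>Inp. \<forall>u. (u, v) \<notin> E"
    and "\<forall>v\<in>Out. \<forall>w. (v, w) \<notin> E"
    and "\<exists>vs. is_path V E Inp Out vs"
  shows "\<not> in_col_space (params V E Inp) (hidden V Inp Out) (incB E) (\<lambda>_. 1)"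
proof
  assume "in_col_space (params V E Inp) (hidden V Inp Out) (incB E) (\<lambda>_. 1)"
  then obtain \<alpha> where al: "\<forall>i\<in>params V E Inp. 1 = (\<Sum>h\<in>hidden V Inp Out. incB E i h * \<alpha> h)"
    unfolding in_col_space_def by blast
  let ?H = "hidden V Inp Out"
  have finH: "finite ?H" using assms(1) unfolding hidden_def by auto
  have biasrow: "\<And>v. v \<in> V - Inp \<Longrightarrow> 1 = (\<Sum>h\<in>?H. (if h = v then - \<alpha> h else 0))"
  proof -
    fix v assume v: "v \<in> V - Inp"
    have "Bias v \<in> params V E Inp" using v unfolding params_def by auto
    with al have "1 = (\<Sum>h\<in>?H. incB E (Bias v) h * \<alpha> h)" by blast
    also have "\<dots> = (\<Sum>h\<in>?H. (if h = v then - \<alpha> h else 0))"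
      by (rule sum.cong) (auto simp: incB_def in_idx_def out_idx_def)
    finally show "1 = (\<Sum>h\<in>?H. (if h = v then - \<alpha> h else 0))" .
  qed
  have ah: "\<And>h. h \<in> ?H \<Longrightarrow> \<alpha> h = -1"
  proof -
    fix h assume h: "h \<in> ?H"
    hence "h \<in> V - Inp" unfolding hidden_def by auto
    from biasrow[OF this] have "1 = - \<alpha> h" using h finH by (simp add: sum.delta)
    thus "\<alpha> h = -1" by simp
  qed
  obtain vs where p: "is_path V E Inp Out vs" using assms(8) by blast
  show False
  proof (cases "length vs = 1")
    case True
    then obtain v where vs: "vs = [v]" by (cases vs) auto
    with p have v: "v \<in> V - Inp" "v \<in> Out" unfolding is_path_def by auto
    hence "v \<notin> ?H" unfolding hidden_def by auto
    with biasrow[OF v(1)] finH show False by (simp add: sum.delta)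
  next
    case False
    have "vs \<noteq> []" using p unfolding is_path_def by blast
    with False have len: "length vs \<ge> 2" by (cases vs) (simp_all add: Suc_le_eq length_greater_0_conv[symmetric] del: length_greater_0_conv)
    define k where "k = length vs - 2"
    have ks: "Suc k < length vs" using len unfolding k_def by auto
    define u where "u = vs ! k"
    define w where "w = vs ! Suc k"
    have e: "(u, w) \<in> E" using p ks unfolding is_path_def u_def w_def by blast
    have "w = last vs"
    proof -
      have "Suc k = length vs - 1" using len unfolding k_def by simp
      moreover have "vs \<noteq> []" using len by auto
      ultimately show ?thesis by (simp add: w_def last_conv_nth)
    qed
    hence wO: "w \<in> Out" using p unfolding is_path_def by auto
    have "Weight (u, w) \<in> params V E Inp" using e unfolding params_def by auto
    with al have "1 = (\<Sum>h\<in>?H. incB E (Weight (u, w)) h * \<alpha> h)" by blast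
    also have "\<dots> = (\<Sum>h\<in>?H. (if h = u then \<alpha> h else 0))"
    proof (rule sum.cong)
      fix h assume "h \<in> ?H"
      hence "h \<noteq> w" using wO unfolding hidden_def by auto
      thus "incB E (Weight (u, w)) h * \<alpha> h = (if h = u then \<alpha> h else 0)"
        using e by (auto simp: incB_def in_idx_def out_idx_def)
    qed simp
    finally have "1 = (\<Sum>h\<in>?H. (if h = u then \<alpha> h else 0))" .
    thus False using finH ah by (cases "u \<in> ?H") (simp_all add: sum.delta)
  qed
qed

end
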